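(* Let $m=2h+1\geq 3$ be odd and let $f_1(x)=x+x^{2^{h+1}-1}+x^{2^m-2^{h+1}+1}\in\mathbb{F}_{2^m}[x]$. Let $s^\infty$ be the sequence $s_t=\operatorname{Tr}(f_1(\alpha^t+1))$, $t\ge 0$. Then the binary cyclic code $\mathcal{C}_s$ has parameters $[2^m-1,\,2^m-2-m,\,4]$ and generator polynomial $g_s(x)=(x-1)\,m_{\alpha^{-1}}(x)$.
   Context: Let $m\ge 1$, $v=2^m-1$, $\alpha$ a primitive element of $\mathbb{F}_{2^m}$, and $\operatorname{Tr}(x)=\sum_{i=0}^{m-1}x^{2^i}$ the absolute trace from $\mathbb{F}_{2^m}$ to $\mathbb{F}_2$. For a polynomial $F$ over $\mathbb{F}_{2^m}$ the binary sequence $s^\infty=(s_t)_{t\ge0}$ is defined by $s_t=\operatorname{Tr}(F(\alpha^t+1))$; it is periodic with period dividing $v$. Its minimal polynomial $g_s(x)$ is the polynomial $1+c_1x+\dots+c_Lx^L\in\mathbb{F}_2[x]$ of least degree $L$ such that $s_i+c_1s_{i-1}+\dots+c_Ls_{i-L}=0$ for all $i\ge L$; its degree $L_s$ is the linear span of $s^\infty$. $\mathcal{C}_s$ denotes the binary cyclic code of length $v$ with generator polynomial $g_s(x)$ (so $\dim\mathcal{C}_s=v-L_s$). For an integer $i$, $m_{\alpha^i}(x)$ is the minimal polynomial of $\alpha^i$ over $\mathbb{F}_2$. $[n,k,d]$ denotes length, dimension, minimum Hamming distance. *)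

theory Defs
  imports "HOL-Computational_Algebra.Polynomial" "HOL-Library.Z2"
begin

text \<open>Binary alphabet F_2 is the library type bit (a field with two elements).\<close>

definition of_bit :: "bit \<Rightarrow> 'a::field" where
  "of_bit b = (if b = 0 then 0 else 1)"

definition to_bit :: "'a::field \<Rightarrow> bit" where
  "to_bit x = (if x = 0 then 0 else 1)"

text \<open>Absolute trace from F_{2^m} to F_2 (the value lies in the prime field {0,1}).\<close>
definition trace2 :: "nat \<Rightarrow> 'a::field \<Rightarrow> 'a" where
  "trace2 m x = (\<Sum>i<m. x ^ (2 ^ i))"

definition primitive_elem :: "'a::{field,finite} \<Rightarrow> bool" where
  "primitive_elem a \<longleftrightarrow> a \<noteq> 0 \<and> (\<forall>x. x \<noteq> 0 \<longrightarrow> (\<exists>k::nat. x = a ^ k))"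

definition is_minpoly_F2 :: "'a::field \<Rightarrow> bit poly \<Rightarrow> bool" where
  "is_minpoly_F2 \<beta> p \<longleftrightarrow> lead_coeff p = 1 \<and> poly (map_poly of_bit p) \<beta> = 0 \<and>
     (\<forall>q. q \<noteq> 0 \<and> poly (map_poly of_bit q) \<beta> = 0 \<longrightarrow> degree p \<le> degree q)"

definition minpoly_F2 :: "'a::field \<Rightarrow> bit poly" where
  "minpoly_F2 \<beta> = (SOME p. is_minpoly_F2 \<beta> p)"

definition seq_annihilates :: "(nat \<Rightarrow> bit) \<Rightarrow> bit poly \<Rightarrow> bool" where
  "seq_annihilates s c \<longleftrightarrow> coeff c 0 = 1 \<and>
     (\<forall>i\<ge>degree c. (\<Sum>j\<le>degree c. coeff c j * s (i - j)) = 0)"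

definition seq_minpoly :: "(nat \<Rightarrow> bit) \<Rightarrow> bit poly" where
  "seq_minpoly s = (SOME c. seq_annihilates s c \<and>
       (\<forall>d. seq_annihilates s d \<longrightarrow> degree c \<le> degree d))"

text \<open>Binary cyclic code of length n with generator polynomial g
  (codewords identified with polynomials of degree < n).\<close>
definition cyclic_code :: "nat \<Rightarrow> bit poly \<Rightarrow> bit poly set" where
  "cyclic_code n g = {c. degree c < n \<and> g dvd c}"

definition hamming_weight :: "bit poly \<Rightarrow> nat" where
  "hamming_weight c = card {i. coeff c i \<noteq> 0}"

definition min_distance :: "bit poly set \<Rightarrow> nat" where
  "min_distance C = Min (hamming_weight ` (C - {0}))"

end

theory Submission
  imports Defs
begin

declare add_bit_eq_xor[simp del] mult_bit_eq_and[simp del]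

lemma ob0[simp]: "of_bit 0 = 0" by (simp add: of_bit_def)
lemma ob1[simp]: "of_bit 1 = 1" by (simp add: of_bit_def)

lemma ob_add: assumes C: "(1::'a::field) + 1 = 0" shows "(of_bit (a + b)::'a) = of_bit a + of_bit b"
  using C by (cases a; cases b) simp_all
lemma ob_mult: "(of_bit (a * b)::'a::field) = of_bit a * of_bit b"
  by (cases a; cases b) simp_all
lemma ob_eq0[simp]: "((of_bit a)::'a::field) = 0 \<longleftrightarrow> a = 0"
  by (cases a) simp_all
lemma ob_01: "(of_bit a ::'a::field) = 0 \<or> of_bit a = 1" by (cases a) simp_all
lemma ob_sq: "(of_bit a ::'a::field) * of_bit a = of_bit a" by (cases a) simp_all

lemma mp_add: assumes C: "(1::'a::field) + 1 = 0"
  shows "map_poly (of_bit::bit\<Rightarrow>'a) (p + q) = map_poly of_bit p + map_poly of_bit q"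
  by (rule poly_eqI) (simp only: coeff_add coeff_map_poly[of of_bit, OF ob0] ob_add[OF C])

lemma bit_minus: "(a::bit) - b = a + b" by (cases a; cases b) simp_all

lemma mp_diff: assumes C: "(1::'a::field) + 1 = 0"
  shows "map_poly (of_bit::bit\<Rightarrow>'a) (p - q) = map_poly of_bit p + map_poly of_bit q"
  by (rule poly_eqI) (simp only: coeff_diff coeff_add bit_minus coeff_map_poly[of of_bit, OF ob0] ob_add[OF C])

lemma mp_mult: assumes C: "(1::'a::field) + 1 = 0"
  shows "map_poly (of_bit::bit\<Rightarrow>'a) (p * q) = map_poly of_bit p * map_poly of_bit q"
proof (induction p)
  case (pCons a p)
  have "map_poly (of_bit::bit\<Rightarrow>'a) (pCons a p * q) = map_poly of_bit (smult a q) + map_poly of_bit (pCons 0 (p * q))"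
    by (simp only: mult_pCons_left mp_add[OF C])
  also have "\<dots> = smult (of_bit a) (map_poly of_bit q) + pCons 0 (map_poly of_bit p * map_poly of_bit q)"
    by (simp add: map_poly_smult ob_mult map_poly_pCons pCons.IH)
  also have "\<dots> = map_poly of_bit (pCons a p) * map_poly of_bit q"
    by (simp add: map_poly_pCons)
  finally show ?case .
qed simp

lemma ev_of_bit: assumes C: "(1::'a::field) + 1 = 0"
  shows "poly (map_poly (of_bit::bit\<Rightarrow>'a) p) (of_bit x) = of_bit (poly p x)"
  by (induction p) (simp_all only: map_poly_pCons[of of_bit, OF ob0] poly_pCons ob_add[OF C] ob_mult map_poly_0 poly_0 ob0)

lemma ev_sq: assumes C: "(1::'a::field) + 1 = 0"
  shows "poly (map_poly (of_bit::bit\<Rightarrow>'a) p) (y^2) = (poly (map_poly of_bit p) y)^2"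
proof (induction p)
  case (pCons a p)
  have sq: "(u + v)^2 = u^2 + v^2" for u v :: 'a
  proof -
    have "(u+v)^2 = u^2 + v^2 + (1+1)*u*v" by (simp add: power2_eq_square algebra_simps)
    then show ?thesis using C by simp
  qed
  show ?case by (simp add: map_poly_pCons pCons.IH sq power_mult_distrib)
      (simp add: power2_eq_square ob_sq)
qed simp

lemma ev_sum: "poly (map_poly (of_bit::bit\<Rightarrow>'a::field) p) y = (\<Sum>i\<in>{i. coeff p i \<noteq> 0}. y ^ i)"
proof -
  have d: "degree (map_poly (of_bit::bit\<Rightarrow>'a) p) = degree p"
    by (rule degree_map_poly) simp
  have "poly (map_poly (of_bit::bit\<Rightarrow>'a) p) y = (\<Sum>i\<le>degree p. of_bit (coeff p i) * y ^ i)"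
    by (simp add: poly_altdef d coeff_map_poly)
  also have "\<dots> = (\<Sum>i\<in>{i. coeff p i \<noteq> 0}. of_bit (coeff p i) * y ^ i)"
    by (rule sum.mono_neutral_right) (auto intro: le_degree)
  also have "\<dots> = (\<Sum>i\<in>{i. coeff p i \<noteq> 0}. y ^ i)"
    by (rule sum.cong) auto
  finally show ?thesis .
qed

lemma bit_of_nat: "(of_nat n :: bit) = (if even n then 0 else 1)"
  by (induction n) auto

lemma poly1_bit: "poly (p::bit poly) 1 = of_nat (card {i. coeff p i \<noteq> 0})"
proof -
  have "poly p 1 = (\<Sum>i\<le>degree p. coeff p i)"
    by (simp only: poly_altdef power_one mult_1_right)
  also have "\<dots> = (\<Sum>i\<in>{i. coeff p i \<noteq> 0}. coeff p i)"
    by (rule sum.mono_neutral_right) (auto intro: le_degree)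
  also have "\<dots> = (\<Sum>i\<in>{i. coeff p i \<noteq> 0}. 1)"
    by (rule sum.cong) auto
  finally show ?thesis by simp
qed

lemma ev_alt: "poly (map_poly (of_bit::bit\<Rightarrow>'a::field) p) y = (\<Sum>i\<le>degree p. of_bit (coeff p i) * y ^ i)"
proof -
  have d: "degree (map_poly (of_bit::bit\<Rightarrow>'a) p) = degree p"
    by (rule degree_map_poly) simp
  show ?thesis by (simp add: poly_altdef d coeff_map_poly)
qed

lemma ob_sum: assumes C: "(1::'a::field) + 1 = 0"
  shows "finite A \<Longrightarrow> (of_bit (\<Sum>i\<in>A. f i) :: 'a) = (\<Sum>i\<in>A. of_bit (f i))"
  by (induction A rule: finite_induct) (simp_all add: ob_add[OF C])

locale F2m =
  fixes \<alpha> :: "'a::{field,finite}" and m h :: nat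
  assumes char2: "(1::'a) + 1 = 0"
    and card: "card (UNIV :: 'a set) = 2 ^ m"
    and mh: "m = 2 * h + 1" and m3: "m \<ge> 3"
    and prim: "primitive_elem \<alpha>"
begin

lemma two0[simp]: "(2::'a) = 0" using char2 by (simp add: one_add_one)

lemma add_self[simp]: "(x::'a) + x = 0"
proof -
  have "x + x = 2*x" by (simp add: algebra_simps)
  then show ?thesis by simp
qed

lemma neg_id: "- (x::'a) = x"
  using add_self[of x] by (metis add_eq_0_iff)

lemma frob: "((x::'a) + y)^2 = x^2 + y^2"
proof -
  have "(x+y)^2 = x^2 + y^2 + (x*y + x*y)" by (simp add: power2_eq_square algebra_simps)
  then show ?thesis by simp
qed

lemma frob_pow: "((x::'a) + y)^(2^i) = x^(2^i) + y^(2^i)"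
proof (induction i)
  case (Suc i)
  have "(x+y)^(2^Suc i) = ((x+y)^(2^i))^2" by (simp add: power_mult[symmetric] mult.commute)
  also have "\<dots> = (x^(2^i))^2 + (y^(2^i))^2" by (simp add: Suc frob)
  also have "\<dots> = x^(2^Suc i) + y^(2^Suc i)" by (simp add: power_mult[symmetric] mult.commute)
  finally show ?case .
qed simp

lemma sum_sq: "finite A \<Longrightarrow> (\<Sum>i\<in>A. f i)^2 = (\<Sum>i\<in>A. (f i::'a)^2)"
  by (induction A rule: finite_induct) (simp_all add: frob)

lemma q8: "(8::nat) \<le> 2 ^ m"
proof -
  have "(2::nat)^3 \<le> 2^m" using m3 by (intro power_increasing) auto
  then show ?thesis by simp
qed

lemma fermat: assumes "(x::'a) \<noteq> 0" shows "x ^ (2^m - 1) = 1"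
proof -
  let ?N = "UNIV - {0::'a}"
  have fin: "finite ?N" by simp
  have cN: "card ?N = 2^m - 1" using card by (simp add: card_Diff_singleton)
  have bij: "bij_betw ((*) x) ?N ?N"
    unfolding bij_betw_def inj_on_def
  proof (intro conjI ballI impI)
    show "(*) x ` ?N = ?N"
    proof
      show "(*) x ` ?N \<subseteq> ?N" using assms by auto
      show "?N \<subseteq> (*) x ` ?N"
      proof
        fix y assume y: "y \<in> ?N"
        have "y = x * (y / x)" using assms by simp
        moreover have "y / x \<in> ?N" using y assms by simp
        ultimately show "y \<in> (*) x ` ?N" by blast
      qed
    qed
  qed (use assms in auto)
  have "(\<Prod>y\<in>?N. x * y) = (\<Prod>y\<in>?N. y)"
    using prod.reindex_bij_betw[OF bij, of "\<lambda>y. y"] by simp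
  moreover have "(\<Prod>y\<in>?N. x * y) = x ^ card ?N * (\<Prod>y\<in>?N. y)"
    by (simp add: prod.distrib)
  moreover have "(\<Prod>y\<in>?N. y) \<noteq> 0" using fin by simp
  ultimately have "x ^ card ?N = 1" by simp
  then show ?thesis using cN by simp
qed

lemma fermat2: "(x::'a) ^ (2^m) = x"
proof (cases "x = 0")
  case True then show ?thesis by simp
next
  case False
  have "(2::nat)^m = Suc (2^m - 1)" using q8 by simp
  then have "x^(2^m) = x * x^(2^m - 1)" by (metis power_Suc)
  then show ?thesis using fermat[OF False] by simp
qed

lemma alpha_nz: "\<alpha> \<noteq> 0" using prim by (simp add: primitive_elem_def)

lemma alpha_ord: assumes "\<alpha> ^ k = 1" "k > 0" shows "2^m - 1 \<le> k"
proof -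
  have "UNIV - {0::'a} \<subseteq> (\<lambda>j. \<alpha> ^ j) ` {..<k}"
  proof
    fix x assume "x \<in> UNIV - {0::'a}"
    then obtain j where j: "x = \<alpha> ^ j" using prim by (auto simp: primitive_elem_def)
    have "\<alpha> ^ j = \<alpha> ^ (k * (j div k) + j mod k)" by (metis mult_div_mod_eq)
    also have "\<dots> = \<alpha> ^ (j mod k)" by (simp only: power_add power_mult assms(1) power_one mult_1_left)
    finally show "x \<in> (\<lambda>j. \<alpha> ^ j) ` {..<k}" using j assms(2) by auto
  qed
  then have "card (UNIV - {0::'a}) \<le> card ((\<lambda>j. \<alpha> ^ j) ` {..<k})" by (intro card_mono) auto
  also have "\<dots> \<le> k" using card_image_le[of "{..<k}" "\<lambda>j. \<alpha> ^ j"] by simp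
  finally show ?thesis using card by (simp add: card_Diff_singleton)
qed

lemma alpha_ne1: "\<alpha> \<noteq> 1"
  using alpha_ord[of 1] q8 by auto

lemma alpha_big: assumes "(z::'a) \<noteq> 0" shows "\<exists>j\<ge>L. z = \<alpha> ^ j"
proof -
  obtain j where j: "z = \<alpha> ^ j" using prim assms by (auto simp: primitive_elem_def)
  have "\<alpha> ^ (j + (2^m - 1) * L) = \<alpha> ^ j * (\<alpha> ^ (2^m - 1)) ^ L" by (simp only: power_add power_mult)
  then have "\<alpha> ^ (j + (2^m - 1) * L) = \<alpha> ^ j" by (simp only: fermat[OF alpha_nz] power_one mult_1_right)
  moreover have "j + (2^m - 1) * L \<ge> L"
  proof -
    have "1 \<le> (2::nat)^m - 1" using q8 by simp
    then have "1 * L \<le> (2^m - 1) * L" by (rule mult_right_mono) simp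
    then have "L \<le> (2^m - 1) * L" by simp
    then show ?thesis by linarith
  qed
  ultimately show ?thesis using j by metis
qed

definition "\<beta> = inverse \<alpha>"

lemma beta_nz: "\<beta> \<noteq> 0" using alpha_nz by (simp add: \<beta>_def)

lemma beta_ord: assumes "\<beta> ^ k = 1" "k > 0" shows "2^m - 1 \<le> k"
proof -
  have "\<alpha> ^ k = 1" using assms(1) by (simp add: \<beta>_def power_inverse)
  then show ?thesis using alpha_ord assms(2) by blast
qed

lemma beta_ne1: "\<beta> \<noteq> 1" using alpha_ne1 by (simp add: \<beta>_def)

lemma beta_gen: assumes "(x::'a) \<noteq> 0" shows "\<exists>e < 2^m - 1. x = \<beta> ^ e"
proof -
  have "inverse x \<noteq> 0" using assms by simp
  then obtain k where k: "inverse x = \<alpha> ^ k" using prim unfolding primitive_elem_def by blast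
  then have x: "x = \<beta> ^ k" by (metis \<beta>_def inverse_inverse_eq power_inverse)
  have "\<beta> ^ k = \<beta> ^ ((2^m - 1) * (k div (2^m - 1)) + k mod (2^m - 1))" by (metis mult_div_mod_eq)
  also have "\<dots> = (\<beta> ^ (2^m - 1)) ^ (k div (2^m - 1)) * \<beta> ^ (k mod (2^m - 1))" by (simp only: power_add power_mult)
  also have "\<dots> = \<beta> ^ (k mod (2^m - 1))" by (simp only: fermat[OF beta_nz] power_one mult_1_left)
  finally show ?thesis using x q8 by (intro exI[of _ "k mod (2^m - 1)"]) auto
qed

lemma ab: "j \<le> i \<Longrightarrow> \<alpha> ^ i * \<beta> ^ j = \<alpha> ^ (i - j)"
proof -
  assume "j \<le> i"
  then have "\<alpha> ^ i = \<alpha> ^ (i - j) * \<alpha> ^ j" by (simp add: power_add[symmetric])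
  then show ?thesis using alpha_nz by (simp add: \<beta>_def power_inverse field_simps)
qed

abbreviation T :: "'a \<Rightarrow> 'a" where "T \<equiv> trace2 m"

lemma tr_add: "T (x + y) = T x + T y"
  by (simp only: trace2_def frob_pow sum.distrib)

lemma tr0: "T 0 = 0" by (simp add: trace2_def power_0_left)

lemma tr_sum: "finite A \<Longrightarrow> T (\<Sum>i\<in>A. f i) = (\<Sum>i\<in>A. T (f i))"
  by (induction A rule: finite_induct) (simp_all add: tr_add tr0)

lemma tr_sqarg: "T (y^2) = T y"
proof -
  obtain m' where m': "m = Suc m'" using m3 by (cases m) auto
  have "T (y^2) = (\<Sum>i<m. y ^ (2 ^ Suc i))"
    by (simp add: trace2_def power_mult[symmetric] mult.commute)
  also have "\<dots> = (\<Sum>i<m'. y ^ (2 ^ Suc i)) + y ^ (2^m)"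
    by (simp add: m')
  also have "\<dots> = y + (\<Sum>i<m'. y ^ (2 ^ Suc i))" by (simp add: fermat2)
  also have "\<dots> = T y" unfolding trace2_def m' sum.lessThan_Suc_shift by simp
  finally show ?thesis .
qed

lemma tr_sq: "(T y)^2 = T y"
proof -
  have "(T y)^2 = (\<Sum>i<m. (y ^ (2^i))^2)" unfolding trace2_def using sum_sq[of "{..<m}" "\<lambda>i. y^(2^i)"] by simp
  also have "\<dots> = T (y^2)" by (simp add: trace2_def power_mult[symmetric] mult.commute)
  finally show ?thesis by (simp add: tr_sqarg)
qed

lemma tr01: "T y = 0 \<or> T y = 1"
proof -
  have "T y * (T y - 1) = 0" using tr_sq[of y] by (simp add: power2_eq_square algebra_simps)
  then show ?thesis by simp
qed

lemma tr_pow2: "T (y ^ (2^k)) = T y"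
proof (induction k)
  case (Suc k)
  have "y ^ (2 ^ Suc k) = (y^(2^k))^2" by (simp add: power_mult[symmetric] mult.commute)
  then show ?case using Suc tr_sqarg by simp
qed simp


lemma tr1: "T 1 = 1"
proof -
  have "T 1 = of_nat m" by (simp add: trace2_def)
  also have "\<dots> = of_nat h + of_nat h + 1" by (simp add: mh)
  finally show ?thesis by simp
qed

lemma tr_scal: "T (of_bit b * y) = of_bit b * T y"
  by (cases b) (simp_all add: tr0)

end

context F2m begin

lemma key_nat: "(2^(h+1) - 1) * 2^(h+1) = (2^m - 2^(h+1) + 1) + (2^m - (1::nat))"
proof -
  obtain Q where Q: "(2::nat)^h = Suc Q" by (metis not0_implies_Suc power_not_zero zero_neq_numeral)
  have a: "(2::nat)^(h+1) = 2 * Suc Q" using Q by simp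
  have b: "(2::nat)^m = 2 * (Suc Q * Suc Q)" unfolding mh Q[symmetric]
    by (simp add: power_add power_mult power2_eq_square mult.commute)
  have e1: "2 * Suc Q - 1 = 2*Q+1" by simp
  have e2: "2 * (Suc Q * Suc Q) - 2 * Suc Q + 1 = 2*Q*Q + 2*Q + 1" by (simp add: algebra_simps)
  have e3: "2 * (Suc Q * Suc Q) - 1 = 2*Q*Q + 4*Q + 1" by (simp add: algebra_simps)
  show ?thesis unfolding a b e1 e2 e3 by (simp add: algebra_simps)
qed

lemma key_exp: "(x::'a)^(2^m - 2^(h+1) + 1) = (x^(2^(h+1)-1))^(2^(h+1))"
proof (cases "x = 0")
  case True
  have "1 \<le> (2::nat)^h" by simp
  moreover have "(2::nat)^(h+1) = 2 * 2^h" by simp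
  ultimately have "2^(h+1) - 1 \<noteq> (0::nat)" by arith
  then show ?thesis using True by (simp add: power_0_left)
next
  case False
  have "(x^(2^(h+1)-1))^(2^(h+1)) = x^((2^m - 2^(h+1) + 1) + (2^m - 1))"
    by (simp only: power_mult[symmetric] key_nat)
  also have "\<dots> = x^(2^m - 2^(h+1) + 1)" by (simp only: power_add fermat[OF False] mult_1_right)
  finally show ?thesis by simp
qed

lemma tr_f: "T (let x = y + 1 in x + x ^ (2 ^ (h + 1) - 1) + x ^ (2 ^ m - 2 ^ (h + 1) + 1)) = T y + 1"
proof -
  have "T (let x = y + 1 in x + x ^ (2 ^ (h + 1) - 1) + x ^ (2 ^ m - 2 ^ (h + 1) + 1))
     = T (y+1) + T ((y+1) ^ (2 ^ (h + 1) - 1)) + T (((y+1) ^ (2 ^ (h + 1) - 1))^(2^(h+1)))"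
    by (simp only: Let_def tr_add key_exp)
  also have "\<dots> = T y + 1"
    by (simp only: tr_pow2 tr_add tr1 add.assoc add_self add_0_right)
  finally show ?thesis .
qed

definition ev :: "bit poly \<Rightarrow> 'a \<Rightarrow> 'a" where "ev p y = poly (map_poly of_bit p) y"

lemma of_to_bit: "(y::'a) = 0 \<or> y = 1 \<Longrightarrow> of_bit (to_bit y) = y"
  by (auto simp: to_bit_def)

end

locale F2s = F2m +
  fixes s :: "nat \<Rightarrow> bit"
  assumes s_def: "\<And>t. s t = to_bit (trace2 m
        (let x = \<alpha> ^ t + 1 in x + x ^ (2 ^ (h + 1) - 1) + x ^ (2 ^ m - 2 ^ (h + 1) + 1)))"
begin

lemma ob_s: "of_bit (s t) = T (\<alpha>^t) + 1"
proof -
  have "s t = to_bit (T (\<alpha>^t) + 1)" using s_def tr_f by simp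
  moreover have "T (\<alpha>^t) + 1 = 0 \<or> T (\<alpha>^t) + 1 = 1" using tr01[of "\<alpha>^t"] by auto
  ultimately show ?thesis using of_to_bit by simp
qed


lemma ann_sum: assumes "degree c \<le> i"
  shows "of_bit (\<Sum>j\<le>degree c. coeff c j * s (i - j)) = of_bit (poly c 1) + T (\<alpha>^i * ev c \<beta>)"
proof -
  let ?L = "degree c"
  have "of_bit (\<Sum>j\<le>?L. coeff c j * s (i - j)) = (\<Sum>j\<le>?L. of_bit (coeff c j) * (T (\<alpha>^(i-j)) + 1))"
    by (simp add: ob_sum[OF char2] ob_mult ob_s)
  also have "\<dots> = (\<Sum>j\<le>?L. of_bit (coeff c j)) + (\<Sum>j\<le>?L. of_bit (coeff c j) * T (\<alpha>^(i-j)))"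
    by (simp add: sum.distrib algebra_simps)
  also have "(\<Sum>j\<le>?L. of_bit (coeff c j)) = (of_bit (poly c 1) :: 'a)"
    using ev_of_bit[OF char2, of c 1] ev_alt[of c "1::'a"] by simp
  also have "(\<Sum>j\<le>?L. of_bit (coeff c j) * T (\<alpha>^(i-j))) = (\<Sum>j\<le>?L. T (of_bit (coeff c j) * (\<alpha>^i * \<beta>^j)))"
    using assms by (intro sum.cong) (simp_all add: tr_scal ab)
  also have "\<dots> = T (\<Sum>j\<le>?L. of_bit (coeff c j) * (\<alpha>^i * \<beta>^j))" by (simp add: tr_sum)
  also have "(\<Sum>j\<le>?L. of_bit (coeff c j) * (\<alpha>^i * \<beta>^j)) = \<alpha>^i * ev c \<beta>"
    by (simp add: ev_def ev_alt sum_distrib_left algebra_simps)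
  finally show ?thesis .
qed

lemma annih_iff: "seq_annihilates s c \<longleftrightarrow> coeff c 0 = 1 \<and> poly c 1 = 0 \<and> ev c \<beta> = 0"
proof
  assume R: "coeff c 0 = 1 \<and> poly c 1 = 0 \<and> ev c \<beta> = 0"
  show "seq_annihilates s c" unfolding seq_annihilates_def
  proof (intro conjI allI impI)
    show "coeff c 0 = 1" using R by simp
    fix i assume "degree c \<le> i"
    from ann_sum[OF this] R have "of_bit (\<Sum>j\<le>degree c. coeff c j * s (i - j)) = (0::'a)"
      by (simp add: tr0)
    then show "(\<Sum>j\<le>degree c. coeff c j * s (i - j)) = 0" by simp
  qed
next
  assume A: "seq_annihilates s c"
  let ?e = "of_bit (poly c 1) :: 'a" and ?b = "ev c \<beta>"
  have E: "?e + T (\<alpha>^i * ?b) = 0" if "degree c \<le> i" for i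
  proof -
    have "(\<Sum>j\<le>degree c. coeff c j * s (i - j)) = 0"
      using A that unfolding seq_annihilates_def by blast
    then show ?thesis using ann_sum[OF that] by simp
  qed
  have b0: "?b = 0"
  proof (rule ccontr)
    assume nb: "?b \<noteq> 0"
    have Z: "?e + T z = 0" if "z \<noteq> 0" for z
    proof -
      have "z / ?b \<noteq> 0" using that nb by simp
      then obtain j where j: "j \<ge> degree c" "z / ?b = \<alpha>^j" using alpha_big by blast
      have "z = z / ?b * ?b" using nb by simp
      then have "z = \<alpha>^j * ?b" using j(2) by simp
      then show ?thesis using E[OF j(1)] by simp
    qed
    have "?e + 1 = 0" using Z[of 1] tr1 by simp
    obtain z :: 'a where z: "z \<notin> {0, 1}"
    proof -
      have "card ({0,1}::'a set) \<le> 2" by (rule card_insert_le_m1) auto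
      have "{0,1} \<noteq> (UNIV::'a set)"
      proof
        assume "{0,1} = (UNIV::'a set)"
        then have "card (UNIV::'a set) \<le> 2" using \<open>card ({0,1}::'a set) \<le> 2\<close> by simp
        then show False using q8 card by simp
      qed
      then show ?thesis using that by blast
    qed
    have "z + 1 \<noteq> 0"
    proof
      assume "z + 1 = 0"
      then have "z = - 1" by (simp add: eq_neg_iff_add_eq_0)
      then have "z = 1" using neg_id[of 1] by simp
      then show False using z by simp
    qed
    then have "?e + T (z + 1) = 0" by (rule Z)
    then have "?e + T z + 1 = 0" by (simp add: tr_add tr1 add.assoc)
    moreover have "?e + T z = 0" using Z z by auto
    ultimately show False by simp
  qed
  have "?e = 0" using E[of "degree c"] b0 by (simp add: tr0)
  then show "coeff c 0 = 1 \<and> poly c 1 = 0 \<and> ev c \<beta> = 0"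
    using A b0 unfolding seq_annihilates_def by simp
qed

end

lemma bit_cases2: "(x::bit) = 0 \<or> x = 1" by (cases x) simp_all

lemma bit_UNIV: "(UNIV :: bit set) = {0, 1}"
  using bit_cases2 by blast

lemma card_deg: "finite {p::bit poly. degree p < Suc k} \<and> card {p::bit poly. degree p < Suc k} = 2 ^ Suc k"
proof (induction k)
  case 0
  have "{p::bit poly. degree p < Suc 0} = {0, 1}"
  proof (rule set_eqI, rule iffI)
    fix p :: "bit poly" assume "p \<in> {p. degree p < Suc 0}"
    then have "degree p = 0" by simp
    then obtain a where pa: "p = [:a:]" by (rule degree_eq_zeroE)
    show "p \<in> {0,1}" using bit_cases2[of a] pa by (auto simp: one_pCons)
  next
    fix p :: "bit poly" assume "p \<in> {0,1}"
    then show "p \<in> {p. degree p < Suc 0}" by auto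
  qed
  then show ?case by simp
next
  case (Suc k)
  let ?A = "{p::bit poly. degree p < Suc k}"
  let ?f = "\<lambda>(a::bit,p). pCons a p"
  have eq: "{p::bit poly. degree p < Suc (Suc k)} = ?f ` (UNIV \<times> ?A)"
  proof (rule set_eqI, rule iffI)
    fix p :: "bit poly" assume "p \<in> {p. degree p < Suc (Suc k)}"
    then have dp: "degree p < Suc (Suc k)" by simp
    obtain a q where pq: "p = pCons a q" by (cases p)
    have "degree q < Suc k"
    proof (cases "q = 0")
      case True then show ?thesis by simp
    next
      case False then show ?thesis using dp pq by (simp add: degree_pCons_eq)
    qed
    then have "(a, q) \<in> UNIV \<times> ?A" by simp
    then show "p \<in> ?f ` (UNIV \<times> ?A)" using pq by (metis (no_types, lifting) case_prod_conv image_eqI)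
  next
    fix p assume "p \<in> ?f ` (UNIV \<times> ?A)"
    then obtain a q where "p = pCons a q" "degree q < Suc k" by auto
    then show "p \<in> {p. degree p < Suc (Suc k)}" by simp
  qed
  have inj: "inj_on ?f (UNIV \<times> ?A)"
    by (rule inj_onI) auto
  have "card {p::bit poly. degree p < Suc (Suc k)} = card ((UNIV::bit set) \<times> ?A)"
    unfolding eq using inj by (simp add: card_image)
  also have "\<dots> = 2 * 2 ^ Suc k" using Suc by (simp add: card_cartesian_product bit_UNIV)
  moreover have "finite ((UNIV::bit set) \<times> ?A)" using Suc by (simp add: bit_UNIV)
  then have "finite {p::bit poly. degree p < Suc (Suc k)}" unfolding eq by (rule finite_imageI)
  ultimately show ?case by simp
qed

context F2m begin

lemma ev_diff: "ev (p - q) y = ev p y + ev q y"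
  by (simp add: ev_def mp_diff[OF char2])

lemma ev_plus: "ev (p + q) y = ev p y + ev q y"
  by (simp add: ev_def mp_add[OF char2])

lemma ev_mult: "ev (p * q) y = ev p y * ev q y"
  by (simp add: ev_def mp_mult[OF char2])

lemma pigeon: "\<exists>p. p \<noteq> 0 \<and> degree p \<le> m \<and> ev p \<beta> = 0"
proof -
  let ?A = "{p::bit poly. degree p < Suc m}"
  have cA: "card ?A = 2 ^ Suc m" and fA: "finite ?A" using card_deg[of m] by auto
  have "\<not> inj_on (\<lambda>p. ev p \<beta>) ?A"
  proof
    assume "inj_on (\<lambda>p. ev p \<beta>) ?A"
    then have "card ?A \<le> card (UNIV :: 'a set)" by (rule card_inj_on_le) auto
    then show False using cA card by simp
  qed
  then obtain p1 p2 where p: "p1 \<in> ?A" "p2 \<in> ?A" "p1 \<noteq> p2" "ev p1 \<beta> = ev p2 \<beta>"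
    unfolding inj_on_def by blast
  have "p1 - p2 \<noteq> 0" using p by simp
  moreover have "degree (p1 - p2) \<le> m" using p degree_diff_le_max[of p1 p2] by simp
  moreover have "ev (p1 - p2) \<beta> = 0" using p by (simp add: ev_diff)
  ultimately show ?thesis by blast
qed

definition "M = minpoly_F2 \<beta>"

lemma M_is: "is_minpoly_F2 \<beta> M"
proof -
  obtain p0 where p0: "p0 \<noteq> 0" "degree p0 \<le> m" "ev p0 \<beta> = 0" using pigeon by blast
  obtain p where p: "p \<noteq> 0 \<and> ev p \<beta> = 0" "\<forall>q. q \<noteq> 0 \<and> ev q \<beta> = 0 \<longrightarrow> degree p \<le> degree q"
    using ex_has_least_nat[of "\<lambda>p. p \<noteq> 0 \<and> ev p \<beta> = 0" p0 degree] p0 by blast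
  have "lead_coeff p \<noteq> 0" using p by simp
  then have "lead_coeff p = 1" by (metis bit_not_zero_iff)
  then have "is_minpoly_F2 \<beta> p" unfolding is_minpoly_F2_def
    using p by (auto simp: ev_def)
  then show ?thesis unfolding M_def minpoly_F2_def by (rule someI)
qed

end

context F2m begin
lemma M_nz: "M \<noteq> 0" using M_is by (auto simp: is_minpoly_F2_def)
lemma M_root: "ev M \<beta> = 0" using M_is by (auto simp: is_minpoly_F2_def ev_def)
lemma M_min: "q \<noteq> 0 \<Longrightarrow> ev q \<beta> = 0 \<Longrightarrow> degree M \<le> degree q"
  using M_is by (auto simp: is_minpoly_F2_def ev_def)

lemma M_le: "degree M \<le> m"
  using pigeon M_min by fastforce

lemma M_dvd: assumes "ev r \<beta> = 0" shows "M dvd r"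
proof -
  have "r = r div M * M + r mod M" by simp
  then have "ev r \<beta> = ev (r div M) \<beta> * ev M \<beta> + ev (r mod M) \<beta>"
    by (metis ev_mult ev_plus)
  then have z: "ev (r mod M) \<beta> = 0" using assms M_root by simp
  have "r mod M = 0"
  proof (rule ccontr)
    assume "r mod M \<noteq> 0"
    then have "degree (r mod M) < degree M" using degree_mod_less[OF M_nz, of r] by simp
    moreover have "degree M \<le> degree (r mod M)" using M_min[OF \<open>r mod M \<noteq> 0\<close> z] .
    ultimately show False by simp
  qed
  then show ?thesis by (simp add: mod_eq_0_iff_dvd)
qed

lemma ev_pow2: "ev p (y ^ (2^i)) = (ev p y) ^ (2^i)"
proof (induction i)
  case (Suc i)
  have "y ^ (2 ^ Suc i) = (y ^ (2^i))^2" by (simp add: power_mult[symmetric] mult.commute)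
  then have "ev p (y ^ (2 ^ Suc i)) = (ev p (y ^ (2^i)))^2" by (simp add: ev_def ev_sq[OF char2])
  also have "\<dots> = (ev p y) ^ (2 ^ Suc i)" by (simp add: Suc power_mult[symmetric] mult.commute)
  finally show ?case .
qed simp

lemma M_ge: "m \<le> degree M"
proof -
  let ?R = "(\<lambda>i. \<beta> ^ (2^i)) ` {..<m}"
  have inj: "inj_on (\<lambda>i. \<beta> ^ (2^i)) {..<m}"
  proof -
    have neq: "\<beta> ^ (2^i) \<noteq> \<beta> ^ (2^j)" if "i < j" "j < m" for i j
    proof
      assume eq: "\<beta> ^ (2^i) = \<beta> ^ (2^j)"
      have lt: "(2::nat)^i < 2^j" using that by simp
      have "\<beta> ^ (2^j) = \<beta> ^ (2^i) * \<beta> ^ (2^j - 2^i)"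
        using lt by (simp add: power_add[symmetric])
      then have b1: "\<beta> ^ (2^j - 2^i) = 1" using eq beta_nz by simp
      have "(2::nat)^j < 2^m" using that by simp
      moreover have "1 \<le> (2::nat)^i" by simp
      moreover have "\<And>a b c::nat. b < a \<Longrightarrow> a < c \<Longrightarrow> 1 \<le> b \<Longrightarrow> a - b < c - 1" by arith
      ultimately have "2^j - 2^i < (2::nat)^m - 1" using lt by blast
      with b1 show False using beta_ord[of "2^j - 2^i"] lt by simp
    qed
    show ?thesis unfolding inj_on_def
      by (metis lessThan_iff linorder_neqE_nat neq)
  qed
  have "card ?R = m" using card_image[OF inj] by simp
  moreover have "?R \<subseteq> {x. poly (map_poly of_bit M) x = 0}"
    using ev_pow2[of M \<beta>] M_root by (auto simp: ev_def power_0_left)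
  moreover have "map_poly (of_bit :: bit \<Rightarrow> 'a) M \<noteq> 0"
    using M_nz by (simp add: map_poly_eq_0_iff)
  then have "card {x. poly (map_poly (of_bit :: bit \<Rightarrow> 'a) M) x = 0} \<le> degree M"
    using card_poly_roots_bound degree_map_poly[of "of_bit :: bit \<Rightarrow> 'a" M] by fastforce
  moreover have "finite {x. poly (map_poly (of_bit :: bit \<Rightarrow> 'a) M) x = 0}" by simp
  ultimately show ?thesis by (metis card_mono order_trans)
qed

lemma M_deg: "degree M = m" using M_le M_ge by simp

lemma M_coeff0: "coeff M 0 = 1"
proof (rule ccontr)
  assume "coeff M 0 \<noteq> 1"
  then have c0: "coeff M 0 = 0" by simp
  obtain a M' where M: "M = pCons a M'" by (cases M)
  have a: "a = 0" using c0 M by simp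
  have "M' \<noteq> 0" using M a M_nz by auto
  have "ev M \<beta> = \<beta> * ev M' \<beta>" using M a by (simp add: ev_def map_poly_pCons)
  then have "ev M' \<beta> = 0" using M_root beta_nz by simp
  then have "degree M \<le> degree M'" using M_min \<open>M' \<noteq> 0\<close> by simp
  moreover have "degree M = Suc (degree M')" using M \<open>M' \<noteq> 0\<close> by simp
  ultimately show False by simp
qed

end

context F2m begin

definition "g = [:-1, 1:] * M"

lemma ev_lin: "ev [:-1, 1:] y = y + 1"
  by (simp add: ev_def map_poly_pCons)

lemma g_dvd: assumes "poly c 1 = 0" "ev c \<beta> = 0" shows "g dvd c"
proof -
  have "[:- 1, 1:] dvd c" using assms(1) poly_eq_0_iff_dvd[of c 1] by simp
  then obtain r where r: "c = [:-1, 1:] * r" by (elim dvdE)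
  have "ev c \<beta> = (\<beta> + 1) * ev r \<beta>" using r by (simp only: ev_mult ev_lin)
  moreover have "\<beta> + 1 \<noteq> 0"
  proof
    assume "\<beta> + 1 = 0"
    then have "\<beta> = - 1" by (simp add: eq_neg_iff_add_eq_0)
    then show False using beta_ne1 neg_id[of 1] by simp
  qed
  ultimately have "ev r \<beta> = 0" using assms(2) by simp
  then have "M dvd r" by (rule M_dvd)
  then show ?thesis unfolding g_def r by (rule mult_dvd_mono[OF dvd_refl])
qed

lemma g_nz: "g \<noteq> 0" using M_nz by (simp del: mult_pCons_left add: g_def)

lemma g_deg: "degree g = m + 1"
  using M_nz M_deg by (simp del: mult_pCons_left add: g_def degree_mult_eq)

lemma g_poly1: "poly g 1 = 0" by (simp add: g_def)
lemma g_ev: "ev g \<beta> = 0" by (simp del: mult_pCons_left add: g_def ev_mult M_root)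
lemma g_coeff0: "coeff g 0 = 1" by (simp add: g_def coeff_mult_0 M_coeff0)

end

context F2s begin

lemma g_annih: "seq_annihilates s g"
  using annih_iff g_poly1 g_ev g_coeff0 by simp

lemma minpoly_eq: "seq_minpoly s = g"
proof -
  have ex: "\<exists>c. seq_annihilates s c \<and> (\<forall>d. seq_annihilates s d \<longrightarrow> degree c \<le> degree d)"
  proof (intro exI conjI allI impI)
    show "seq_annihilates s g" by (rule g_annih)
    fix d assume "seq_annihilates s d"
    then have d: "coeff d 0 = 1" "poly d 1 = 0" "ev d \<beta> = 0" using annih_iff by auto
    then have "g dvd d" by (intro g_dvd)
    moreover have "d \<noteq> 0" using d by auto
    ultimately show "degree g \<le> degree d" by (rule dvd_imp_degree_le)
  qed
  let ?c = "seq_minpoly s"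
  have c: "seq_annihilates s ?c" "\<forall>d. seq_annihilates s d \<longrightarrow> degree ?c \<le> degree d"
    using someI_ex[OF ex] unfolding seq_minpoly_def by auto
  have cc: "coeff ?c 0 = 1" "poly ?c 1 = 0" "ev ?c \<beta> = 0" using c(1) annih_iff by auto
  then have "g dvd ?c" by (intro g_dvd)
  then obtain u where u: "?c = g * u" by (elim dvdE)
  have "?c \<noteq> 0" using cc by auto
  then have "u \<noteq> 0" using u by auto
  have "degree ?c \<le> degree g" using c(2) g_annih by blast
  then have "degree u = 0" using u g_nz \<open>u \<noteq> 0\<close> by (simp add: degree_mult_eq)
  then obtain a where a: "u = [:a:]" by (elim degree_eq_zeroE)
  then have "a \<noteq> 0" using \<open>u \<noteq> 0\<close> by auto
  then have "a = 1" by (metis bit_not_zero_iff)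
  then show ?thesis using u a by (simp add: one_pCons[symmetric])
qed

end

context F2m begin

abbreviation "n \<equiv> 2^m - (1::nat)"

lemma m_small: "m + 3 \<le> 2^m"
proof -
  have "m - 1 < 2^(m-1)" by (rule less_exp)
  moreover have "(2::nat)^m = 2 * 2^(m-1)" using m3 by (metis Suc_pred' less_le_trans power_Suc zero_less_numeral numeral_less_iff semiring_norm(76) le_eq_less_or_eq not_less0 order.strict_trans2)
  ultimately show ?thesis using m3 by linarith
qed

lemma code_card: "card (cyclic_code n g) = 2 ^ (2^m - 2 - m)"
proof -
  define k where "k = 2^m - 2 - m"
  have k1: "k \<ge> 1" using m_small unfolding k_def by linarith
  have nk: "n = (m + 1) + k" using m_small unfolding k_def by linarith
  have eq: "cyclic_code n g = (\<lambda>r. g * r) ` {r. degree r < k}"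
  proof (rule set_eqI, rule iffI)
    fix c assume "c \<in> cyclic_code n g"
    then have c: "degree c < n" "g dvd c" by (auto simp: cyclic_code_def)
    then obtain r where r: "c = g * r" by (elim dvdE)
    have "degree r < k"
    proof (cases "r = 0")
      case True then show ?thesis using k1 by simp
    next
      case False
      then have "degree c = m + 1 + degree r" using r g_nz g_deg by (simp add: degree_mult_eq)
      then show ?thesis using c(1) nk by linarith
    qed
    then show "c \<in> (\<lambda>r. g * r) ` {r. degree r < k}" using r by blast
  next
    fix c assume "c \<in> (\<lambda>r. g * r) ` {r. degree r < k}"
    then obtain r where r: "c = g * r" "degree r < k" by blast
    have "degree c \<le> degree g + degree r" unfolding r(1) by (rule degree_mult_le)
    then have "degree c < n" using r(2) g_deg nk by linarith
    then show "c \<in> cyclic_code n g" using r by (simp add: cyclic_code_def)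
  qed
  have inj: "inj_on (\<lambda>r. g * r) {r. degree r < k}"
    using g_nz by (auto simp: inj_on_def)
  have kk: "k = Suc (k - 1)" using k1 by simp
  have "card (cyclic_code n g) = card {r::bit poly. degree r < k}"
    unfolding eq using inj by (simp add: card_image)
  also have "\<dots> = 2 ^ k" using card_deg[of "k - 1"] kk by simp
  finally show ?thesis unfolding k_def .
qed

lemma code_finite: "finite (cyclic_code n g)"
proof -
  have "n = Suc (n - 1)" using m_small by simp
  then have "finite {p::bit poly. degree p < n}" using card_deg[of "n - 1"] by metis
  then show ?thesis by (rule finite_subset[rotated]) (auto simp: cyclic_code_def)
qed

lemma supp_fin: "finite {i. coeff (c::bit poly) i \<noteq> 0}"
  by (rule finite_subset[of _ "{..degree c}"]) (auto intro: le_degree)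

lemma wt_ge4: assumes "c \<in> cyclic_code n g" "c \<noteq> 0" shows "4 \<le> hamming_weight c"
proof -
  let ?S = "{i. coeff c i \<noteq> 0}"
  have c: "degree c < n" "g dvd c" using assms(1) by (auto simp: cyclic_code_def)
  then obtain r where r: "c = g * r" by (elim dvdE)
  have p1: "poly c 1 = 0" using r g_poly1 by simp
  have evc: "ev c \<beta> = 0" using r g_ev by (simp add: ev_mult)
  have ev: "even (card ?S)" using p1 poly1_bit[of c] bit_of_nat[of "card ?S"] by (auto split: if_splits)
  have "degree c \<in> ?S" using assms(2) by (metis (mono_tags) leading_coeff_0_iff mem_Collect_eq)
  then have "?S \<noteq> {}" by blast
  then have "card ?S \<noteq> 0" using supp_fin[of c] by simp
  moreover have "card ?S \<noteq> 2"
  proof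
    assume "card ?S = 2"
    then obtain i j where ij: "?S = {i, j}" "i \<noteq> j" by (auto simp: card_2_iff)
    have key: False if "i < j" "?S = {i,j}" for i j
    proof -
      have "j \<in> ?S" using that by auto
      then have "j \<le> degree c" by (simp add: le_degree)
      then have jn: "j < n" using c(1) by simp
      have "ev c \<beta> = \<beta>^i + \<beta>^j" using that ev_sum[of c \<beta>] by (simp add: ev_def)
      then have s0: "\<beta>^i + \<beta>^j = 0" using evc by simp
      have "\<beta>^j = \<beta>^i * \<beta>^(j - i)" using that(1) by (simp add: power_add[symmetric])
      then have "\<beta>^i * (1 + \<beta>^(j-i)) = 0" using s0 by (simp add: algebra_simps)
      then have "1 + \<beta>^(j-i) = 0" using beta_nz by simp
      then have "\<beta>^(j-i) = - 1" by (simp add: eq_neg_iff_add_eq_0 add.commute)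
      then have "\<beta>^(j-i) = 1" using neg_id[of 1] by simp
      then have "n \<le> j - i" using beta_ord that(1) by simp
      then show False using jn by linarith
    qed
    show False
    proof (cases "i < j")
      case True then show ?thesis using key ij by blast
    next
      case False then have "j < i" using ij by simp
      then show ?thesis using key[of j i] ij by (simp add: insert_commute)
    qed
  qed
  ultimately have "4 \<le> card ?S" using ev by presburger
  then show ?thesis by (simp add: hamming_weight_def)
qed

lemma add_self2: "(x::'a) + (x + y) = y"
  by (simp add: add.assoc[symmetric])

lemma sum0: "(x::'a) + y = 0 \<longleftrightarrow> x = y"
proof
  assume "x + y = 0"
  then have "x = - y" by (simp add: eq_neg_iff_add_eq_0)
  then show "x = y" using neg_id by simp
qed simp

lemma card_ins_le: "finite A \<Longrightarrow> card (insert x A) \<le> Suc (card A)"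
  by (simp add: card_insert_if)

lemma card4: "card {w, x, y, z::'b} \<le> 4"
proof -
  have "card {z} \<le> 1" by simp
  then have "card {y, z} \<le> 2" using card_ins_le[of "{z}" y] by simp
  then have "card {x, y, z} \<le> 3" using card_ins_le[of "{y,z}" x] by simp
  then show ?thesis using card_ins_le[of "{x,y,z}" w] by simp
qed

lemma witness: "\<exists>c \<in> cyclic_code n g. c \<noteq> 0 \<and> hamming_weight c = 4"
proof -
  have small: "A \<noteq> (UNIV::'a set)" if "card A \<le> 4" for A
  proof
    assume "A = UNIV"
    then show False using that q8 card by simp
  qed
  have "{0, 0, 0, 1} \<noteq> (UNIV::'a set)" by (rule small[OF card4])
  then obtain a :: 'a where "a \<notin> {0, 0, 0, 1}" by blast
  then have a: "a \<noteq> 0" "a \<noteq> 1" by auto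
  have "{0, 1, a, a + 1} \<noteq> (UNIV::'a set)" by (rule small[OF card4])
  then obtain b :: 'a where "b \<notin> {0, 1, a, a + 1}" by blast
  then have b: "b \<noteq> 0" "b \<noteq> 1" "b \<noteq> a" "b \<noteq> a + 1" by auto
  define c0 where "c0 = 1 + a + b"
  have c0: "c0 \<noteq> 0" "c0 \<noteq> 1" "c0 \<noteq> a" "c0 \<noteq> b"
  proof -
    show "c0 \<noteq> 0"
    proof
      assume "c0 = 0"
      then have "(1 + a) + b = 0" by (simp only: c0_def)
      then have "1 + a = b" by (rule sum0[THEN iffD1])
      then have "b = a + 1" by (simp add: add.commute)
      then show False using b(4) by simp
    qed
    show "c0 \<noteq> 1"
    proof
      assume "c0 = 1"
      then have "1 + (a + b) = 1 + 0" by (simp only: c0_def add.assoc add_0_right)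
      then have "a + b = 0" by (rule add_left_imp_eq)
      then have "a = b" by (rule sum0[THEN iffD1])
      then show False using b(3) by simp
    qed
    show "c0 \<noteq> a"
    proof
      assume h: "c0 = a"
      have "c0 + a = (1 + b) + (a + a)" unfolding c0_def by (simp only: ac_simps)
      then have "1 + b = 0" using h by simp
      then have "1 = b" by (rule sum0[THEN iffD1])
      then show False using b(2) by simp
    qed
    show "c0 \<noteq> b"
    proof
      assume h: "c0 = b"
      have "c0 + b = (1 + a) + (b + b)" unfolding c0_def by (simp only: ac_simps)
      then have "1 + a = 0" using h by simp
      then have "1 = a" by (rule sum0[THEN iffD1])
      then show False using a(2) by simp
    qed
  qed
  obtain e1 where e1: "e1 < n" "a = \<beta>^e1" using beta_gen[OF a(1)] by blast
  obtain e2 where e2: "e2 < n" "b = \<beta>^e2" using beta_gen[OF b(1)] by blast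
  obtain e3 where e3: "e3 < n" "c0 = \<beta>^e3" using beta_gen[OF c0(1)] by blast
  have d1: "e1 \<noteq> 0" using e1(2) a(2) by (metis power_0)
  have d2: "e2 \<noteq> 0" using e2(2) b(2) by (metis power_0)
  have d3: "e3 \<noteq> 0" using e3(2) c0(2) by (metis power_0)
  have d4: "e1 \<noteq> e2" using e1(2) e2(2) b(3) by metis
  have d5: "e1 \<noteq> e3" using e1(2) e3(2) c0(3) by metis
  have d6: "e2 \<noteq> e3" using e2(2) e3(2) c0(4) by metis
  note d = d1 d2 d3 d4 d5 d6
  define E where "E = {0, e1, e2, e3}"
  define p :: "bit poly" where "p = (\<Sum>e\<in>E. monom 1 e)"
  have cp: "coeff p i = (if i \<in> E then 1 else 0)" for i
  proof -
    have "coeff p i = (\<Sum>e\<in>E. if e = i then 1 else 0)"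
      unfolding p_def coeff_sum by (simp add: coeff_monom)
    also have "\<dots> = (if i \<in> E then 1 else 0)"
      by (simp add: sum.delta E_def)
    finally show ?thesis .
  qed
  have S: "{i. coeff p i \<noteq> 0} = E" using cp by auto
  have cE: "card E = 4" using d by (simp add: E_def)
  have "hamming_weight p = 4" using S cE by (simp add: hamming_weight_def)
  moreover have "p \<noteq> 0" using cp[of 0] by (auto simp: E_def)
  moreover have "degree p \<le> n - 1"
    by (rule degree_le) (use cp e1 e2 e3 in \<open>auto simp: E_def\<close>)
  then have "degree p < n" using m_small by linarith
  moreover have "g dvd p"
  proof (rule g_dvd)
    show "poly p 1 = 0" using poly1_bit[of p] S cE bit_of_nat[of 4] by simp
    have "ev p \<beta> = (\<Sum>e\<in>E. \<beta>^e)" using ev_sum[of p \<beta>] S by (simp add: ev_def)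
    also have "\<dots> = 1 + (a + (b + c0))" using d e1 e2 e3 by (simp add: E_def)
    also have "\<dots> = c0 + c0" unfolding c0_def by (simp only: ac_simps)
    also have "\<dots> = 0" by simp
    finally show "ev p \<beta> = 0" .
  qed
  ultimately show ?thesis unfolding cyclic_code_def by blast
qed

lemma min_dist: "min_distance (cyclic_code n g) = 4"
  unfolding min_distance_def
proof (rule Min_eqI)
  show "finite (hamming_weight ` (cyclic_code n g - {0}))" using code_finite by simp
  show "\<And>y. y \<in> hamming_weight ` (cyclic_code n g - {0}) \<Longrightarrow> 4 \<le> y" using wt_ge4 by auto
  show "4 \<in> hamming_weight ` (cyclic_code n g - {0})" using witness by force
qed

end

theorem theorem1:
  fixes \<alpha> :: "'a::{field,finite}" and m h :: nat and s :: "nat \<Rightarrow> bit"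
  assumes char2: "(1::'a) + 1 = 0"
    and card: "card (UNIV :: 'a set) = 2 ^ m"
    and mh: "m = 2 * h + 1" and m3: "m \<ge> 3"
    and prim: "primitive_elem \<alpha>"
    and s_def: "\<And>t. s t = to_bit (trace2 m
        (let x = \<alpha> ^ t + 1 in x + x ^ (2 ^ (h + 1) - 1) + x ^ (2 ^ m - 2 ^ (h + 1) + 1)))"
  shows "seq_minpoly s = [:-1, 1:] * minpoly_F2 (inverse \<alpha>)
    \<and> card (cyclic_code (2 ^ m - 1) (seq_minpoly s)) = 2 ^ (2 ^ m - 2 - m)
    \<and> min_distance (cyclic_code (2 ^ m - 1) (seq_minpoly s)) = 4"
proof -
  interpret F2s \<alpha> m h s
    by unfold_locales (use char2 card mh m3 prim s_def in auto)
  have e: "seq_minpoly s = [:-1, 1:] * minpoly_F2 (inverse \<alpha>)"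
    using minpoly_eq by (simp add: g_def M_def \<beta>_def)
  show ?thesis using minpoly_eq code_card min_dist e by simp
qed

end
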